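(* For every positive integer $n$, $$b^{2}_{3,4}(2n)\equiv b_{3,4}(n)\pmod 4.$$
   Context: For integers $r\ge1$ write $f_r=\prod_{j\ge1}(1-q^{rj})$. For coprime positive integers $\ell,m$ and a positive integer $k$, $b^{k}_{\ell,m}(n)$ denotes the number of $k$-colored partitions of $n$ into parts not divisible by $\ell$ or by $m$; equivalently $\sum_{n\ge0} b^{k}_{\ell,m}(n)q^n=\dfrac{f_\ell^k f_m^k}{f_1^k f_{\ell m}^k}$. Also $b_{\ell,m}(n)=b^{1}_{\ell,m}(n)$ is the number of (uncolored) partitions of $n$ into parts not divisible by $\ell$ or $m$, so $\sum_{n\ge0}b_{3,4}(n)q^n=\dfrac{f_3f_4}{f_1f_{12}}$ and $\sum_{n\ge0}b^2_{3,4}(n)q^n=\dfrac{f_3^2f_4^2}{f_1^2f_{12}^2}$. *)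

theory Defs
  imports Main "HOL-Library.Multiset"
begin

definition colored_parts_set :: "nat \<Rightarrow> nat \<Rightarrow> nat \<Rightarrow> nat \<Rightarrow> (nat \<times> nat) multiset set" where
  "colored_parts_set k l m n =
     {P. (\<forall>x \<in># P. 0 < fst x \<and> \<not> l dvd fst x \<and> \<not> m dvd fst x \<and> snd x < k)
         \<and> sum_mset (image_mset fst P) = n}"

definition b_col :: "nat \<Rightarrow> nat \<Rightarrow> nat \<Rightarrow> nat \<Rightarrow> nat" where
  "b_col k l m n = card (colored_parts_set k l m n)"

end

theory Submission
  imports Defs
begin

definition alw :: "nat \<Rightarrow> bool" where
  "alw j \<longleftrightarrow> 0 < j \<and> \<not> 3 dvd j \<and> \<not> 4 dvd j"

definition PT :: "nat \<Rightarrow> nat multiset set" where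
  "PT n = {P. (\<forall>x\<in>#P. alw x) \<and> sum_mset P = n}"

lemma size_le_sum: "(\<forall>x\<in>#P. 0 < (x::nat)) \<Longrightarrow> size P \<le> sum_mset P"
  by (induction P) auto

lemma mem_le_sum: "(x::nat) \<in># P \<Longrightarrow> x \<le> sum_mset P"
  by (induction P) auto

lemma fin_le: "finite {P::nat multiset. (\<forall>x\<in>#P. 0 < x) \<and> sum_mset P \<le> N}"
proof -
  have "{P::nat multiset. (\<forall>x\<in>#P. 0 < x) \<and> sum_mset P \<le> N}
     \<subseteq> mset ` {xs. set xs \<subseteq> {0..N} \<and> length xs \<le> N}"
  proof
    fix P :: "nat multiset" assume "P \<in> {P. (\<forall>x\<in>#P. 0 < x) \<and> sum_mset P \<le> N}"
    then have h: "\<forall>x\<in>#P. 0 < x" "sum_mset P \<le> N" by auto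
    let ?xs = "sorted_list_of_multiset P"
    have "P = mset ?xs" by simp
    moreover have "set ?xs \<subseteq> {0..N}" using h mem_le_sum by fastforce
    moreover have "length ?xs \<le> N" using h size_le_sum[of P]
      by (metis dual_order.trans mset_sorted_list_of_multiset size_mset)
    ultimately show "P \<in> mset ` {xs. set xs \<subseteq> {0..N} \<and> length xs \<le> N}" by blast
  qed
  moreover have "finite (mset ` {xs. set xs \<subseteq> {0..N} \<and> length xs \<le> N})"
    using finite_lists_length_le[of "{0..N}" N] by simp
  ultimately show ?thesis by (rule finite_subset)
qed

lemma fin_PT_le: "finite {P. (\<forall>x\<in>#P. alw x) \<and> sum_mset P \<le> N}"
  by (rule finite_subset[OF _ fin_le[of N]]) (auto simp: alw_def)

lemma fin_PT: "finite (PT n)"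
  by (rule finite_subset[OF _ fin_PT_le[of n]]) (auto simp: PT_def)

lemma b1: "b_col 1 3 4 n = card (PT n)"
proof -
  have "bij_betw (image_mset fst) (colored_parts_set 1 3 4 n) (PT n)"
  proof (rule bij_betw_byWitness[where f'="image_mset (\<lambda>a. (a, 0::nat))"])
    show "\<forall>a\<in>colored_parts_set 1 3 4 n. image_mset (\<lambda>a. (a, 0)) (image_mset fst a) = a"
    proof
      fix P assume "P \<in> colored_parts_set 1 3 4 n"
      then have "\<forall>x\<in>#P. snd x = 0" by (auto simp: colored_parts_set_def)
      then have "image_mset (\<lambda>x. (fst x, 0)) P = image_mset id P"
        by (intro image_mset_cong) (metis id_apply prod.collapse)
      then show "image_mset (\<lambda>a. (a, 0)) (image_mset fst P) = P" by (simp add: multiset.map_comp o_def)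
    qed
    show "\<forall>a'\<in>PT n. image_mset fst (image_mset (\<lambda>a. (a, 0::nat)) a') = a'"
      by (simp add: multiset.map_comp o_def)
    show "image_mset fst ` colored_parts_set 1 3 4 n \<subseteq> PT n"
      by (auto simp: colored_parts_set_def PT_def alw_def)
    show "image_mset (\<lambda>a. (a, 0::nat)) ` PT n \<subseteq> colored_parts_set 1 3 4 n"
    proof
      fix Q assume "Q \<in> image_mset (\<lambda>a. (a, 0::nat)) ` PT n"
      then obtain P where P: "P \<in> PT n" "Q = image_mset (\<lambda>a. (a, 0::nat)) P" by blast
      have "\<forall>x\<in>#Q. 0 < fst x \<and> \<not> 3 dvd fst x \<and> \<not> 4 dvd fst x \<and> snd x < 1"
        using P by (auto simp: PT_def alw_def)
      moreover have "sum_mset (image_mset fst Q) = n"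
        using P by (simp add: PT_def multiset.map_comp o_def)
      ultimately show "Q \<in> colored_parts_set 1 3 4 n" by (simp add: colored_parts_set_def)
    qed
  qed
  then show ?thesis unfolding b_col_def by (rule bij_betw_same_card)
qed

lemma image_id_on: "(\<And>x. x \<in># M \<Longrightarrow> g x = x) \<Longrightarrow> image_mset g M = M"
  using image_mset_cong[of M g id] by simp

definition PP :: "nat \<Rightarrow> (nat multiset \<times> nat multiset) set" where
  "PP N = {(P1,P2). (\<forall>x\<in>#P1. alw x) \<and> (\<forall>x\<in>#P2. alw x) \<and> sum_mset P1 + sum_mset P2 = N}"

lemma b2: "b_col 2 3 4 N = card (PP N)"
proof -
  let ?f = "\<lambda>P::(nat\<times>nat) multiset. (image_mset fst (filter_mset (\<lambda>x. snd x = 0) P),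
                   image_mset fst (filter_mset (\<lambda>x. snd x \<noteq> 0) P))"
  let ?g = "\<lambda>(P1,P2). image_mset (\<lambda>a. (a, 0::nat)) P1 + image_mset (\<lambda>a. (a, 1::nat)) P2"
  have "bij_betw ?f (colored_parts_set 2 3 4 N) (PP N)"
  proof (rule bij_betw_byWitness[where f'="?g"])
    show "\<forall>a\<in>colored_parts_set 2 3 4 N. ?g (?f a) = a"
    proof
      fix P assume "P \<in> colored_parts_set 2 3 4 N"
      then have s: "\<forall>x\<in>#P. snd x < 2" by (auto simp: colored_parts_set_def)
      have 1: "image_mset (\<lambda>a. (a, 0::nat)) (image_mset fst (filter_mset (\<lambda>x. snd x = 0) P))
              = filter_mset (\<lambda>x. snd x = 0) P"
        unfolding multiset.map_comp o_def by (rule image_id_on) auto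
      have 2: "image_mset (\<lambda>a. (a, 1::nat)) (image_mset fst (filter_mset (\<lambda>x. snd x \<noteq> 0) P))
              = filter_mset (\<lambda>x. snd x \<noteq> 0) P"
        unfolding multiset.map_comp o_def
      proof (rule image_id_on)
        fix x assume "x \<in># filter_mset (\<lambda>x. snd x \<noteq> 0) P"
        then have "snd x = 1" using s by auto
        then show "(fst x, 1) = x" by (metis prod.collapse)
      qed
      show "?g (?f P) = P" using 1 2 multiset_partition[of P "\<lambda>x. snd x = 0"] by simp
    qed
    show "\<forall>a'\<in>PP N. ?f (?g a') = a'"
      by (auto simp: filter_mset_image_mset multiset.map_comp o_def)
    show "?f ` colored_parts_set 2 3 4 N \<subseteq> PP N"
    proof
      fix Q assume "Q \<in> ?f ` colored_parts_set 2 3 4 N"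
      then obtain P where P: "P \<in> colored_parts_set 2 3 4 N" "Q = ?f P" by blast
      have "sum_mset (image_mset fst P) = N" using P by (auto simp: colored_parts_set_def)
      then have "sum_mset (image_mset fst (filter_mset (\<lambda>x. snd x = 0) P))
             + sum_mset (image_mset fst (filter_mset (\<lambda>x. snd x \<noteq> 0) P)) = N"
        using multiset_partition[of P "\<lambda>x. snd x = 0"] by (metis image_mset_union sum_mset.union)
      moreover have "\<forall>x\<in>#P. alw (fst x)" using P by (auto simp: colored_parts_set_def alw_def)
      ultimately show "Q \<in> PP N" using P(2) by (auto simp: PP_def)
    qed
    show "?g ` PP N \<subseteq> colored_parts_set 2 3 4 N"
    proof
      fix Q assume "Q \<in> ?g ` PP N"
      then obtain P1 P2 where P: "(P1,P2) \<in> PP N" "Q = ?g (P1,P2)" by auto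
      have Q: "Q = image_mset (\<lambda>a. (a, 0::nat)) P1 + image_mset (\<lambda>a. (a, 1::nat)) P2" using P(2) by simp
      have a1: "\<forall>x\<in>#P1. alw x" and a2: "\<forall>x\<in>#P2. alw x" and sN: "sum_mset P1 + sum_mset P2 = N"
        using P(1) by (auto simp: PP_def)
      have "\<forall>x\<in>#Q. 0 < fst x \<and> \<not> 3 dvd fst x \<and> \<not> 4 dvd fst x \<and> snd x < 2"
      proof
        fix x assume "x \<in># Q"
        then have "(x \<in># image_mset (\<lambda>a. (a, 0::nat)) P1) \<or> (x \<in># image_mset (\<lambda>a. (a, 1::nat)) P2)"
          unfolding Q by simp
        then have "alw (fst x) \<and> snd x < 2" using a1 a2 by auto
        then show "0 < fst x \<and> \<not> 3 dvd fst x \<and> \<not> 4 dvd fst x \<and> snd x < 2" by (simp add: alw_def)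
      qed
      moreover have "sum_mset (image_mset fst Q) = N"
        unfolding Q using sN by (simp add: multiset.map_comp o_def)
      ultimately show "Q \<in> colored_parts_set 2 3 4 N" by (simp add: colored_parts_set_def)
    qed
  qed
  then show ?thesis unfolding b_col_def by (rule bij_betw_same_card)
qed


definition CC :: "nat \<Rightarrow> (nat multiset \<times> nat multiset) set" where
  "CC m = {(R1,R2). (\<forall>x\<in>#R1. alw x) \<and> (\<forall>x\<in>#R2. alw x) \<and> sum_mset R1 + sum_mset R2 = m
             \<and> (\<forall>j. count R1 j = 0 \<or> count R2 j = 0)}"

definition DS :: "nat \<Rightarrow> nat multiset set" where
  "DS N = {D. (\<forall>x\<in>#D. alw x) \<and> 2 * sum_mset D \<le> N}"

lemma fin_DS: "finite (DS N)"
  by (rule finite_subset[OF _ fin_PT_le[of N]]) (auto simp: DS_def)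

lemma fin_CC: "finite (CC m)"
proof -
  let ?S = "{P. (\<forall>x\<in>#P. alw x) \<and> sum_mset P \<le> m}"
  have "CC m \<subseteq> ?S \<times> ?S" by (auto simp: CC_def)
  then show ?thesis using fin_PT_le[of m] by (meson finite_SigmaI finite_subset)
qed

lemma b3: "card (PP N) = (\<Sum>D\<in>DS N. card (CC (N - 2 * sum_mset D)))"
proof -
  let ?h = "\<lambda>(P1::nat multiset, P2::nat multiset). (P1 \<inter># P2, (P1 - (P1 \<inter># P2), P2 - (P1 \<inter># P2)))"
  let ?h' = "\<lambda>(D::nat multiset, (R1::nat multiset, R2::nat multiset)). (D + R1, D + R2)"
  have "bij_betw ?h (PP N) (Sigma (DS N) (\<lambda>D. CC (N - 2 * sum_mset D)))"
  proof (rule bij_betw_byWitness[where f'="?h'"])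
    show "\<forall>a\<in>PP N. ?h' (?h a) = a"
      by (auto simp: multiset_eq_iff)
    show "\<forall>a'\<in>Sigma (DS N) (\<lambda>D. CC (N - 2 * sum_mset D)). ?h (?h' a') = a'"
    proof
      fix a' assume "a' \<in> Sigma (DS N) (\<lambda>D. CC (N - 2 * sum_mset D))"
      then obtain D R1 R2 where a: "a' = (D, (R1, R2))" and d: "\<forall>j. count R1 j = 0 \<or> count R2 j = 0"
        by (auto simp: CC_def)
      have "(D + R1) \<inter># (D + R2) = D" unfolding multiset_eq_iff
      proof
        fix j show "count ((D + R1) \<inter># (D + R2)) j = count D j" using d[rule_format, of j] by auto
      qed
      moreover have "R1 - R2 = R1" unfolding multiset_eq_iff
      proof
        fix j show "count (R1 - R2) j = count R1 j" using d[rule_format, of j] by auto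
      qed
      moreover have "R2 - R1 = R2" unfolding multiset_eq_iff
      proof
        fix j show "count (R2 - R1) j = count R2 j" using d[rule_format, of j] by auto
      qed
      ultimately show "?h (?h' a') = a'" using a by simp
    qed
    show "?h ` PP N \<subseteq> Sigma (DS N) (\<lambda>D. CC (N - 2 * sum_mset D))"
    proof
      fix b assume "b \<in> ?h ` PP N"
      then obtain P1 P2 where P: "(P1,P2) \<in> PP N" "b = ?h (P1,P2)" by auto
      let ?D = "P1 \<inter># P2"
      have a1: "\<forall>x\<in>#P1. alw x" and a2: "\<forall>x\<in>#P2. alw x" and sN: "sum_mset P1 + sum_mset P2 = N"
        using P(1) by (auto simp: PP_def)
      have s1: "?D \<subseteq># P1" and s2: "?D \<subseteq># P2" by auto
      have e1: "P1 = ?D + (P1 - ?D)" and e2: "P2 = ?D + (P2 - ?D)" by (simp_all add: multiset_eq_iff min_def)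
      have "sum_mset P1 = sum_mset ?D + sum_mset (P1 - ?D)" using e1 by (metis sum_mset.union)
      moreover have "sum_mset P2 = sum_mset ?D + sum_mset (P2 - ?D)" using e2 by (metis sum_mset.union)
      ultimately have ss: "2 * sum_mset ?D \<le> N" "sum_mset (P1 - ?D) + sum_mset (P2 - ?D) = N - 2 * sum_mset ?D"
        using sN by auto
      have "\<forall>x\<in>#?D. alw x" using a1 by auto
      moreover have "\<forall>x\<in>#P1 - ?D. alw x" using a1 by (meson in_diffD)
      moreover have "\<forall>x\<in>#P2 - ?D. alw x" using a2 by (meson in_diffD)
      moreover have "\<forall>j. count (P1 - ?D) j = 0 \<or> count (P2 - ?D) j = 0" by auto
      ultimately show "b \<in> Sigma (DS N) (\<lambda>D. CC (N - 2 * sum_mset D))"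
        using P(2) ss by (simp add: DS_def CC_def)
    qed
    show "?h' ` Sigma (DS N) (\<lambda>D. CC (N - 2 * sum_mset D)) \<subseteq> PP N"
    proof
      fix b assume "b \<in> ?h' ` Sigma (DS N) (\<lambda>D. CC (N - 2 * sum_mset D))"
      then obtain D R1 R2 where b: "b = (D + R1, D + R2)" and D: "D \<in> DS N"
        and R: "(R1, R2) \<in> CC (N - 2 * sum_mset D)" by auto
      show "b \<in> PP N" using D R unfolding b DS_def CC_def PP_def by auto
    qed
  qed
  then have "card (PP N) = card (Sigma (DS N) (\<lambda>D. CC (N - 2 * sum_mset D)))"
    by (rule bij_betw_same_card)
  also have "\<dots> = (\<Sum>D\<in>DS N. card (CC (N - 2 * sum_mset D)))"
    using fin_DS fin_CC by simp
  finally show ?thesis .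
qed


lemma b4: "card (CC m) = (\<Sum>R\<in>PT m. 2 ^ card (set_mset R))"
proof -
  let ?k = "\<lambda>(R1::nat multiset, R2::nat multiset). (R1 + R2, set_mset R1)"
  let ?k' = "\<lambda>(R::nat multiset, X::nat set). (filter_mset (\<lambda>x. x \<in> X) R, filter_mset (\<lambda>x. x \<notin> X) R)"
  have "bij_betw ?k (CC m) (Sigma (PT m) (\<lambda>R. Pow (set_mset R)))"
  proof (rule bij_betw_byWitness[where f'="?k'"])
    show "\<forall>a\<in>CC m. ?k' (?k a) = a"
    proof
      fix a assume "a \<in> CC m"
      then obtain R1 R2 where a: "a = (R1, R2)" and d: "\<forall>j. count R1 j = 0 \<or> count R2 j = 0"
        by (auto simp: CC_def)
      have "filter_mset (\<lambda>x. x \<in> set_mset R1) (R1 + R2) = R1" unfolding multiset_eq_iff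
      proof
        fix j show "count (filter_mset (\<lambda>x. x \<in> set_mset R1) (R1 + R2)) j = count R1 j"
          using d[rule_format, of j] by (auto simp: count_eq_zero_iff)
      qed
      moreover have "filter_mset (\<lambda>x. x \<notin> set_mset R1) (R1 + R2) = R2" unfolding multiset_eq_iff
      proof
        fix j show "count (filter_mset (\<lambda>x. x \<notin> set_mset R1) (R1 + R2)) j = count R2 j"
          using d[rule_format, of j] by (auto simp: count_eq_zero_iff)
      qed
      ultimately show "?k' (?k a) = a" using a by simp
    qed
    show "\<forall>a'\<in>Sigma (PT m) (\<lambda>R. Pow (set_mset R)). ?k (?k' a') = a'"
    proof
      fix a' assume "a' \<in> Sigma (PT m) (\<lambda>R. Pow (set_mset R))"
      then obtain R X where a: "a' = (R, X)" and X: "X \<subseteq> set_mset R" by auto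
      have "set_mset (filter_mset (\<lambda>x. x \<in> X) R) = X" using X by auto
      then show "?k (?k' a') = a'" using a multiset_partition[of R "\<lambda>x. x \<in> X"] by simp
    qed
    show "?k ` CC m \<subseteq> Sigma (PT m) (\<lambda>R. Pow (set_mset R))"
    proof
      fix b assume "b \<in> ?k ` CC m"
      then obtain R1 R2 where b: "b = ?k (R1, R2)" and R: "(R1, R2) \<in> CC m" by auto
      have a1: "\<forall>x\<in>#R1. alw x" and a2: "\<forall>x\<in>#R2. alw x" and sN: "sum_mset R1 + sum_mset R2 = m"
        using R by (auto simp: CC_def)
      have "R1 + R2 \<in> PT m" using a1 a2 sN unfolding PT_def by auto
      moreover have "set_mset R1 \<in> Pow (set_mset (R1 + R2))" by auto
      ultimately show "b \<in> Sigma (PT m) (\<lambda>R. Pow (set_mset R))" using b by simp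
    qed
    show "?k' ` Sigma (PT m) (\<lambda>R. Pow (set_mset R)) \<subseteq> CC m"
    proof
      fix b assume "b \<in> ?k' ` Sigma (PT m) (\<lambda>R. Pow (set_mset R))"
      then obtain R X where b: "b = ?k' (R, X)" and R: "R \<in> PT m" by auto
      have "sum_mset (filter_mset (\<lambda>x. x \<in> X) R) + sum_mset (filter_mset (\<lambda>x. x \<notin> X) R) = m"
        using R multiset_partition[of R "\<lambda>x. x \<in> X"] unfolding PT_def by (metis (mono_tags) mem_Collect_eq sum_mset.union)
      moreover have "\<forall>x\<in>#R. alw x" using R by (simp add: PT_def)
      moreover have "\<forall>j. count (filter_mset (\<lambda>x. x \<in> X) R) j = 0 \<or> count (filter_mset (\<lambda>x. x \<notin> X) R) j = 0"
        by simp
      ultimately show "b \<in> CC m" unfolding b CC_def by simp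
    qed
  qed
  then have "card (CC m) = card (Sigma (PT m) (\<lambda>R. Pow (set_mset R)))"
    by (rule bij_betw_same_card)
  also have "\<dots> = (\<Sum>R\<in>PT m. card (Pow (set_mset R)))"
    using fin_PT by simp
  also have "\<dots> = (\<Sum>R\<in>PT m. 2 ^ card (set_mset R))"
    by (simp add: card_Pow)
  finally show ?thesis .
qed

lemma odd_dvd2: "odd (j::nat) \<Longrightarrow> j dvd 2*m \<Longrightarrow> j dvd m"
  by (smt (verit, best) dvd_add_times_triv_right_iff dvd_refl dvd_trans
    even_Suc mult_Suc_right mult_dvd_mono mult_of_nat_commute of_nat_numeral)

lemma even_T: assumes "m \<ge> 1" shows "even (card {j. alw j \<and> j dvd 2*m})"
proof -
  let ?O = "{j::nat. odd j \<and> \<not> 3 dvd j \<and> j dvd m}"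
  have fO: "finite ?O" by (rule finite_subset[of _ "{..m}"]) (use assms in \<open>auto dest: dvd_imp_le\<close>)
  have eq: "{j. alw j \<and> j dvd 2*m} = ?O \<union> (\<lambda>j. 2*j) ` ?O"
  proof (rule set_eqI, rule iffI)
    fix j assume "j \<in> {j. alw j \<and> j dvd 2*m}"
    then have j: "0 < j" "\<not> 3 dvd j" "\<not> 4 dvd j" "j dvd 2*m" by (auto simp: alw_def)
    show "j \<in> ?O \<union> (\<lambda>j. 2*j) ` ?O"
    proof (cases "odd j")
      case True
      have "j dvd m" by (rule odd_dvd2[OF True j(4)])
      then have "j \<in> ?O" using True j(2) by simp
      then show ?thesis by blast
    next
      case False
      have "\<exists>i. j = 2*i \<and> odd i" using j(3) False by presburger
      then obtain i where i: "j = 2*i" "odd i" by blast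
      have "\<not> 3 dvd i" using j(2) i(1) by presburger
      moreover have "i dvd m" using j(4) i(1) by simp
      ultimately have "i \<in> ?O" using i(2) by simp
      then show ?thesis using i(1) by blast
    qed
  next
    fix j assume "j \<in> ?O \<union> (\<lambda>j. 2*j) ` ?O"
    then show "j \<in> {j. alw j \<and> j dvd 2*m}"
    proof
      assume "j \<in> ?O"
      then have i: "odd j" "\<not> 3 dvd j" "j dvd m" by auto
      have "0 < j" "\<not> 4 dvd j" using i(1) by presburger+
      moreover have "j dvd 2*m" using i(3) by simp
      ultimately show ?thesis using i by (auto simp: alw_def)
    next
      assume "j \<in> (\<lambda>j. 2*j) ` ?O"
      then obtain i where i: "j = 2*i" "odd i" "\<not> 3 dvd i" "i dvd m" by auto
      have "\<not> 3 dvd j" "\<not> 4 dvd j" "0 < j" using i(1,2,3) by presburger+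
      then show ?thesis using i by (auto simp: alw_def)
    qed
  qed
  have "card (?O \<union> (\<lambda>j. 2*j) ` ?O) = card ?O + card ((\<lambda>j. 2*j) ` ?O)"
    by (rule card_Un_disjoint) (use fO in auto)
  also have "card ((\<lambda>j. 2*j) ` ?O) = card ?O" by (rule card_image) (auto simp: inj_on_def)
  finally show ?thesis using eq by simp
qed


lemma S1card: assumes "m \<ge> 1"
  shows "card {R\<in>PT (2*m). card (set_mset R) = 1} = card {j. alw j \<and> j dvd 2*m}"
proof -
  let ?T = "{j. alw j \<and> j dvd 2*m}"
  let ?S = "{R\<in>PT (2*m). card (set_mset R) = 1}"
  let ?f = "\<lambda>j. replicate_mset (2*m div j) j"
  have "bij_betw ?f ?T ?S"
  proof (rule bij_betw_byWitness[where f'="\<lambda>R. Max (set_mset R)"])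
    show "\<forall>a\<in>?T. Max (set_mset (?f a)) = a"
    proof
      fix j assume "j \<in> ?T"
      then have j: "0 < j" "j dvd 2*m" by (auto simp: alw_def)
      have "j \<le> 2*m" using j assms by (intro dvd_imp_le) auto
      then have "0 < 2*m div j" using j by (simp add: div_greater_zero_iff)
      then show "Max (set_mset (?f j)) = j" by simp
    qed
    show "\<forall>a'\<in>?S. ?f (Max (set_mset a')) = a'"
    proof
      fix R assume R: "R \<in> ?S"
      then have "card (set_mset R) = 1" by simp
      then obtain j where sj: "set_mset R = {j}" by (rule card_1_singletonE)
      have aj: "alw j" using R sj by (auto simp: PT_def)
      have Rr: "R = replicate_mset (count R j) j" unfolding multiset_eq_iff
      proof
        fix x show "count R x = count (replicate_mset (count R j) j) x"
          using sj by (cases "x = j") (auto simp: count_eq_zero_iff)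
      qed
      have "sum_mset R = 2*m" using R by (simp add: PT_def)
      moreover have "sum_mset R = sum_mset (replicate_mset (count R j) j)" using Rr by (rule arg_cong)
      ultimately have cj: "count R j * j = 2*m" by simp
      have "2*m div j = count R j" unfolding cj[symmetric] using aj by (simp add: alw_def)
      then have "count R j = 2*m div j" by simp
      then have "?f (Max (set_mset R)) = replicate_mset (count R j) j" using sj by simp
      also have "\<dots> = R" by (rule Rr[symmetric])
      finally show "?f (Max (set_mset R)) = R" .
    qed
    show "?f ` ?T \<subseteq> ?S"
    proof
      fix R assume "R \<in> ?f ` ?T"
      then obtain j where R: "R = ?f j" and j: "alw j" "j dvd 2*m" by auto
      have "j \<le> 2*m" using j assms by (intro dvd_imp_le) auto
      then have "0 < 2*m div j" using j by (simp add: div_greater_zero_iff alw_def)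
      then have "set_mset R = {j}" using R by simp
      moreover have "sum_mset R = 2*m" using R j(2) by simp
      ultimately show "R \<in> ?S" using j(1) by (simp add: PT_def)
    qed
    show "(\<lambda>R. Max (set_mset R)) ` ?S \<subseteq> ?T"
    proof
      fix x assume "x \<in> (\<lambda>R. Max (set_mset R)) ` ?S"
      then obtain R where x: "x = Max (set_mset R)" and R: "R \<in> ?S" by (rule imageE)
      from R have "card (set_mset R) = 1" by simp
      then obtain j where sj: "set_mset R = {j}" by (rule card_1_singletonE)
      have aj: "alw j" using R sj by (auto simp: PT_def)
      have Rr: "R = replicate_mset (count R j) j" unfolding multiset_eq_iff
      proof
        fix x show "count R x = count (replicate_mset (count R j) j) x"
          using sj by (cases "x = j") (auto simp: count_eq_zero_iff)
      qed
      have "sum_mset R = 2*m" using R by (simp add: PT_def)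
      moreover have "sum_mset R = sum_mset (replicate_mset (count R j) j)" using Rr by (rule arg_cong)
      ultimately have "count R j * j = 2*m" by simp
      then have "j dvd 2*m" by (metis dvd_triv_right)
      then show "x \<in> ?T" using x sj aj by simp
    qed
  qed
  then have "card ?T = card ?S" by (rule bij_betw_same_card)
  then show ?thesis by simp
qed

lemma c4: assumes "m \<ge> 1" shows "4 dvd card (CC (2*m))"
proof -
  let ?A = "PT (2*m)"
  let ?S = "{R\<in>PT (2*m). card (set_mset R) = 1}"
  have fA: "finite ?A" by (rule fin_PT)
  have sub: "?S \<subseteq> ?A" by auto
  have "card (CC (2*m)) = (\<Sum>R\<in>?A. (2::nat) ^ card (set_mset R))" by (rule b4)
  also have "\<dots> = (\<Sum>R\<in>?A - ?S. (2::nat) ^ card (set_mset R)) + (\<Sum>R\<in>?S. (2::nat) ^ card (set_mset R))"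
    by (rule sum.subset_diff[OF sub fA])
  finally have e: "card (CC (2*m)) = (\<Sum>R\<in>?A - ?S. (2::nat) ^ card (set_mset R)) + (\<Sum>R\<in>?S. (2::nat) ^ card (set_mset R))" .
  have "(\<Sum>R\<in>?S. (2::nat) ^ card (set_mset R)) = (\<Sum>R\<in>?S. (2::nat))" by (rule sum.cong) auto
  also have "\<dots> = 2 * card ?S" by simp
  also have "\<dots> = 2 * card {j. alw j \<and> j dvd 2*m}" using S1card[OF assms] by simp
  finally have s1: "(\<Sum>R\<in>?S. (2::nat) ^ card (set_mset R)) = 2 * card {j. alw j \<and> j dvd 2*m}" .
  obtain k where "card {j. alw j \<and> j dvd 2*m} = 2*k" using even_T[OF assms] by (auto elim!: evenE)
  then have 1: "4 dvd (\<Sum>R\<in>?S. (2::nat) ^ card (set_mset R))" using s1 by simp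
  have 2: "4 dvd (\<Sum>R\<in>?A - ?S. (2::nat) ^ card (set_mset R))"
  proof (rule dvd_sum)
    fix R assume R: "R \<in> ?A - ?S"
    have "sum_mset R = 2*m" using R by (simp add: PT_def)
    then have "R \<noteq> {#}" using assms by auto
    then have c0: "card (set_mset R) \<noteq> 0" by simp
    have c1: "card (set_mset R) \<noteq> 1" using R by auto
    have "card (set_mset R) \<ge> 2" using c0 c1 by presburger
    then have "(2::nat)^2 dvd (2::nat) ^ card (set_mset R)" by (rule le_imp_power_dvd)
    then show "4 dvd (2::nat) ^ card (set_mset R)" by simp
  qed
  show ?thesis unfolding e by (rule dvd_add[OF 2 1])
qed

lemma cc0: "card (CC 0) = 1"
proof -
  have "CC 0 = {({#},{#})}"
  proof (rule set_eqI, rule iffI)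
    fix a assume a: "a \<in> CC 0"
    then obtain R1 R2 where aa: "a = (R1,R2)" and h: "\<forall>x\<in>#R1. alw x" "\<forall>x\<in>#R2. alw x"
       "sum_mset R1 = 0" "sum_mset R2 = 0" by (auto simp: CC_def)
    have "R1 = {#}"
    proof (rule ccontr)
      assume "R1 \<noteq> {#}" then obtain x where x: "x \<in># R1" by (meson multiset_nonemptyE)
      then have "x \<le> 0" using mem_le_sum[OF x] h(3) by simp
      then show False using h(1) x by (auto simp: alw_def)
    qed
    moreover have "R2 = {#}"
    proof (rule ccontr)
      assume "R2 \<noteq> {#}" then obtain x where x: "x \<in># R2" by (meson multiset_nonemptyE)
      then have "x \<le> 0" using mem_le_sum[OF x] h(4) by simp
      then show False using h(2) x by (auto simp: alw_def)
    qed
    ultimately show "a \<in> {({#},{#})}" using aa by simp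
  next
    fix a assume "a \<in> {({#}, {#}) :: nat multiset \<times> nat multiset}"
    then show "a \<in> CC 0" by (simp add: CC_def)
  qed
  then show ?thesis by simp
qed

theorem mainTheorem3:
  fixes n :: nat
  assumes "n \<ge> 1"
  shows "b_col 2 3 4 (2 * n) mod 4 = b_col 1 3 4 n mod 4"
proof -
  let ?A = "DS (2*n)"
  let ?E = "PT n"
  let ?g = "\<lambda>D. card (CC (2*n - 2 * sum_mset D))"
  have sub: "?E \<subseteq> ?A" by (auto simp: PT_def DS_def)
  have "b_col 2 3 4 (2 * n) = (\<Sum>D\<in>?A. ?g D)" using b2 b3 by simp
  also have "\<dots> = (\<Sum>D\<in>?A - ?E. ?g D) + (\<Sum>D\<in>?E. ?g D)"
    by (rule sum.subset_diff[OF sub fin_DS])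
  finally have e: "b_col 2 3 4 (2 * n) = (\<Sum>D\<in>?A - ?E. ?g D) + (\<Sum>D\<in>?E. ?g D)" .
  have "(\<Sum>D\<in>?E. ?g D) = (\<Sum>D\<in>?E. 1)" by (rule sum.cong) (auto simp: PT_def cc0)
  then have 1: "(\<Sum>D\<in>?E. ?g D) = b_col 1 3 4 n" using b1 by simp
  have 2: "4 dvd (\<Sum>D\<in>?A - ?E. ?g D)"
  proof (rule dvd_sum)
    fix D assume D: "D \<in> ?A - ?E"
    then have "2 * sum_mset D \<le> 2*n" "sum_mset D \<noteq> n" by (auto simp: DS_def PT_def)
    then have "2*n - 2 * sum_mset D = 2 * (n - sum_mset D)" "n - sum_mset D \<ge> 1" by auto
    then show "4 dvd ?g D" using c4 by simp
  qed
  obtain k where k: "(\<Sum>D\<in>?A - ?E. ?g D) = 4 * k" using 2 by (auto elim: dvdE)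
  show ?thesis using e 1 k by simp
qed

end
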